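(* Let $X$ be a real Hilbert space, $f,g\in\Gamma_0(X)$, $T:=\operatorname{Id}-\operatorname{P}_f+\operatorname{P}_g\operatorname{R}_f$, $v:=P_{\overline{\operatorname{ran}}(\operatorname{Id}-T)}(0)$, $D:=\operatorname{dom}\partial f-\operatorname{dom}\partial g$, $R:=\operatorname{ran}\partial f+\operatorname{ran}\partial g$. Assume $\overline{\operatorname{ran}}(\operatorname{Id}-T)=\overline{D\cap R}=\overline D\cap\overline R$ and $P_{\overline R}(0)=0$. Let $Z:=\{x\in X: 0\in -v+\partial f(x)+\partial g(x-v)\}$. Then (i) $Z=\{x\in X: 0\in\partial f(x)+\partial g(x-v)\}$; (ii) if $Z\neq\varnothing$, then $Z=\operatorname{argmin}_{x\in X}\big(-\langle x,v\rangle+f(x)+g(x-v)\big)=\operatorname{argmin}_{x\in X}\big(f(x)+g(x-v)\big)$.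
   Context: $\Gamma_0(X)$ is the set of convex, lower semicontinuous, proper functions on $X$. $\operatorname{P}_h:=(\operatorname{Id}+\partial h)^{-1}$ is the proximal mapping and $\operatorname{R}_h:=2\operatorname{P}_h-\operatorname{Id}$. $P_S$ is the projection onto a nonempty closed convex set $S$. *)

theory Defs
  imports "HOL-Analysis.Analysis" "HOL-Library.Extended_Real"
begin

text \<open>Real Hilbert space: type class {real_inner, complete_space}.
  Functions X -> ]-inf,+inf] are modelled as 'a => ereal.\<close>

definition epigraph :: "('a \<Rightarrow> ereal) \<Rightarrow> ('a \<times> real) set" where
  "epigraph f = {(x, t). f x \<le> ereal t}"

definition Gamma0 :: "('a::real_normed_vector \<Rightarrow> ereal) \<Rightarrow> bool" where
  "Gamma0 f \<longleftrightarrow> convex (epigraph f) \<and> closed (epigraph f)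
     \<and> (\<forall>x. f x \<noteq> -\<infinity>) \<and> (\<exists>x. f x \<noteq> \<infinity>)"

definition subdiff :: "('a::real_inner \<Rightarrow> ereal) \<Rightarrow> 'a \<Rightarrow> 'a set" where
  "subdiff f x = {u. f x \<noteq> \<infinity> \<and> (\<forall>y. f x + ereal (inner u (y - x)) \<le> f y)}"

definition dom_subdiff :: "('a::real_inner \<Rightarrow> ereal) \<Rightarrow> 'a set" where
  "dom_subdiff f = {x. subdiff f x \<noteq> {}}"

definition ran_subdiff :: "('a::real_inner \<Rightarrow> ereal) \<Rightarrow> 'a set" where
  "ran_subdiff f = (\<Union>x. subdiff f x)"

text \<open>Proximal mapping P_f = (Id + subdiff f)^{-1} (single-valued for f in Gamma0).\<close>
definition prox :: "('a::real_inner \<Rightarrow> ereal) \<Rightarrow> 'a \<Rightarrow> 'a" where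
  "prox f x = (THE p. x - p \<in> subdiff f p)"

definition refl_prox :: "('a::real_inner \<Rightarrow> ereal) \<Rightarrow> 'a \<Rightarrow> 'a" where
  "refl_prox f x = 2 *\<^sub>R prox f x - x"

definition proj :: "'a::real_inner set \<Rightarrow> 'a \<Rightarrow> 'a" where
  "proj S a = (THE y. y \<in> S \<and> (\<forall>z\<in>S. dist a y \<le> dist a z))"

definition argmin :: "('a \<Rightarrow> ereal) \<Rightarrow> 'a set" where
  "argmin h = {x. \<forall>y. h x \<le> h y}"

end

theory Submission
  imports Defs
begin


lemma G0_fin:
  assumes "Gamma0 f" "f x \<noteq> \<infinity>"
  shows "f x = ereal (real_of_ereal (f x))"
  using assms unfolding Gamma0_def by (cases "f x") auto

lemma G0_conv:
  assumes G: "Gamma0 f" and x: "f x \<noteq> \<infinity>" and y: "f y \<noteq> \<infinity>" and t: "0 \<le> t" "t \<le> 1"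
  shows "f ((1-t) *\<^sub>R x + t *\<^sub>R y) \<le> ereal ((1-t) * real_of_ereal (f x) + t * real_of_ereal (f y))"
proof -
  have c: "convex (epigraph f)" using G unfolding Gamma0_def by auto
  have "(x, real_of_ereal (f x)) \<in> epigraph f" "(y, real_of_ereal (f y)) \<in> epigraph f"
    using G0_fin[OF G x] G0_fin[OF G y] unfolding epigraph_def by auto
  from convexD[OF c this, of "1-t" t] t
  have "(1-t) *\<^sub>R (x, real_of_ereal (f x)) + t *\<^sub>R (y, real_of_ereal (f y)) \<in> epigraph f" by auto
  then show ?thesis unfolding epigraph_def by simp
qed

lemma G0_lsc:
  assumes G: "Gamma0 f" and le: "\<And>n. f (z n) \<le> ereal (t n)"
    and zl: "z \<longlonglongrightarrow> zz" and tl: "t \<longlonglongrightarrow> tt"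
  shows "f zz \<le> ereal tt"
proof -
  have c: "closed (epigraph f)" using G unfolding Gamma0_def by auto
  have "(\<lambda>n. (z n, t n)) \<longlonglongrightarrow> (zz, tt)" using zl tl by (intro tendsto_intros)
  moreover have "\<forall>n. (z n, t n) \<in> epigraph f" using le unfolding epigraph_def by auto
  ultimately have "(zz, tt) \<in> epigraph f"
    using c[unfolded closed_sequential_limits, rule_format, of "\<lambda>n. (z n, t n)" "(zz, tt)"] by blast
  then show ?thesis unfolding epigraph_def by auto
qed

lemma par_id:
  fixes a b y :: "'a::real_inner"
  shows "(norm ((1-1/2) *\<^sub>R a + (1/2) *\<^sub>R b - y))\<^sup>2 = ((norm (a-y))\<^sup>2 + (norm (b-y))\<^sup>2)/2 - (norm (a-b))\<^sup>2/4"
proof -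
  have e: "(1-1/2) *\<^sub>R a + (1/2) *\<^sub>R b - y = (1/2) *\<^sub>R ((a - y) + (b - y))"
    by (simp add: algebra_simps) (metis field_sum_of_halves scaleR_add_left scaleR_one)
  have e2: "a - b = (a - y) - (b - y)" by simp
  show ?thesis unfolding e e2 power2_norm_eq_inner
    apply (simp add: inner_add_left inner_add_right inner_diff_left inner_diff_right inner_commute algebra_simps)
    by (simp add: field_simps)
qed

lemma seg_id:
  fixes z x y :: "'a::real_inner"
  shows "(norm ((1-t) *\<^sub>R z + t *\<^sub>R x - y))\<^sup>2 = (norm (z-y))\<^sup>2 + 2*t*inner (z-y) (x-z) + t\<^sup>2 * (norm (x-z))\<^sup>2"
proof -
  have e: "(1-t) *\<^sub>R z + t *\<^sub>R x - y = (z - y) + t *\<^sub>R (x - z)" by (simp add: algebra_simps)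
  show ?thesis unfolding e power2_norm_eq_inner
    by (simp add: inner_add_left inner_add_right inner_diff_left inner_diff_right inner_commute algebra_simps power2_eq_square)
qed

lemma small_t:
  fixes A B K :: real
  assumes "\<And>t. 0 < t \<Longrightarrow> t \<le> 1 \<Longrightarrow> A \<le> B + t * K" "0 \<le> K"
  shows "A \<le> B"
proof (rule ccontr)
  assume "\<not> A \<le> B"
  define t where "t = min 1 ((A - B) / (2*(K+1)))"
  have t0: "0 < t" "t \<le> 1" using \<open>\<not> A \<le> B\<close> assms(2) by (auto simp: t_def)
  have "t * K \<le> ((A - B) / (2*(K+1))) * K" using assms(2) by (intro mult_right_mono) (auto simp: t_def)
  also have "\<dots> < A - B"
  proof -
    have "((A - B) / (2*(K+1))) * K = (A - B) * (K / (2*(K+1)))" by simp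
    also have "\<dots> < (A - B) * 1" using \<open>\<not> A \<le> B\<close> assms(2)
      by (intro mult_strict_left_mono) (auto simp: field_simps)
    finally show ?thesis by simp
  qed
  finally show False using assms(1)[OF t0] by simp
qed

lemma lin1:
  fixes A B D E G W m :: real
  shows "A < m + D \<Longrightarrow> B < m + E \<Longrightarrow> D \<le> G \<Longrightarrow> E \<le> G \<Longrightarrow> G < W \<Longrightarrow> (A+B)/2 - m < W"
  by (simp add: field_simps)

lemma min_exists:
  fixes f :: "'a::{real_inner,complete_space} \<Rightarrow> ereal"
  assumes G: "Gamma0 f" and lb: "\<And>x. ereal (inner u x - C) \<le> f x" and e: "\<epsilon> > 0"
  shows "\<exists>z. f z \<noteq> \<infinity> \<and> (\<forall>x. f x \<noteq> \<infinity> \<longrightarrow>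
      real_of_ereal (f z) - inner u z + \<epsilon>/2 * (norm (z - y))\<^sup>2
      \<le> real_of_ereal (f x) - inner u x + \<epsilon>/2 * (norm (x - y))\<^sup>2)
    \<and> u - \<epsilon> *\<^sub>R (z - y) \<in> subdiff f z"
proof -
  define F where "F x = real_of_ereal (f x)" for x
  define h where "h x = F x - inner u x + \<epsilon>/2 * (norm (x - y))\<^sup>2" for x
  define D where "D = {x. f x \<noteq> \<infinity>}"
  have fin: "f x = ereal (F x)" if "x \<in> D" for x
    using G0_fin[OF G] that unfolding F_def D_def by auto
  have Flb: "inner u x - C \<le> F x" if "x \<in> D" for x
    using lb[of x] fin[OF that] by simp
  have hlb: "- C \<le> h x" if "x \<in> D" for x
  proof -
    have "0 \<le> \<epsilon>/2 * (norm (x - y))\<^sup>2" using e by simp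
    then show ?thesis using Flb[OF that] unfolding h_def by linarith
  qed
  obtain x1 where x1: "x1 \<in> D" using G unfolding Gamma0_def D_def by auto
  define m where "m = Inf (h ` D)"
  have bdd: "bdd_below (h ` D)" unfolding bdd_below_def using hlb by blast
  have mle: "m \<le> h x" if "x \<in> D" for x
    unfolding m_def using bdd that by (intro cInf_lower) auto
  have "\<exists>x\<in>D. h x < m + inverse (real (Suc n))" for n
  proof -
    have "Inf (h ` D) < m + inverse (real (Suc n))" unfolding m_def by simp
    from cInf_lessD[OF _ this] x1 show ?thesis by auto
  qed
  then obtain zs where zsD: "\<And>n. zs n \<in> D" and zsh: "\<And>n. h (zs n) < m + inverse (real (Suc n))"
    by metis
  have midD: "(1-1/2) *\<^sub>R a + (1/2) *\<^sub>R b \<in> D"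
    and midF: "F ((1-1/2) *\<^sub>R a + (1/2) *\<^sub>R b) \<le> (1-1/2) * F a + (1/2) * F b"
    if "a \<in> D" "b \<in> D" for a b
  proof -
    have le: "f ((1-1/2) *\<^sub>R a + (1/2) *\<^sub>R b) \<le> ereal ((1-1/2) * F a + (1/2) * F b)"
      using G0_conv[OF G, of a b "1/2"] that unfolding D_def F_def by auto
    then show "(1-1/2) *\<^sub>R a + (1/2) *\<^sub>R b \<in> D" unfolding D_def by auto
    then show "F ((1-1/2) *\<^sub>R a + (1/2) *\<^sub>R b) \<le> (1-1/2) * F a + (1/2) * F b"
      using le fin by fastforce
  qed
  have strong: "\<epsilon>/8 * (norm (a - b))\<^sup>2 \<le> (h a + h b)/2 - m" if "a \<in> D" "b \<in> D" for a b
  proof -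
    let ?c = "(1-1/2) *\<^sub>R a + (1/2) *\<^sub>R b"
    have "m \<le> h ?c" using mle midD that by blast
    also have "h ?c = F ?c - ((inner u a + inner u b)/2) + \<epsilon>/2 * (((norm (a-y))\<^sup>2 + (norm (b-y))\<^sup>2)/2 - (norm (a-b))\<^sup>2/4)"
      unfolding h_def par_id by (simp add: inner_add_right field_simps)
    also have "\<dots> \<le> (F a + F b)/2 - ((inner u a + inner u b)/2) + \<epsilon>/2 * (((norm (a-y))\<^sup>2 + (norm (b-y))\<^sup>2)/2 - (norm (a-b))\<^sup>2/4)"
      using midF[OF that] by simp
    finally show ?thesis unfolding h_def by (simp add: field_simps)
  qed
  have cau: "Cauchy zs"
  proof (rule metric_CauchyI)
    fix r :: real assume r: "r > 0"
    then have "\<epsilon> * r\<^sup>2 / 8 > 0" using e by simp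
    then obtain N where N: "inverse (real (Suc N)) < \<epsilon> * r\<^sup>2 / 8" using reals_Archimedean by blast
    show "\<exists>M. \<forall>m\<ge>M. \<forall>n\<ge>M. dist (zs m) (zs n) < r"
    proof (intro exI allI impI)
      fix p q assume p: "N \<le> p" and q: "N \<le> q"
      have ip: "inverse (real (Suc p)) \<le> inverse (real (Suc N))" using p by (simp add: field_simps)
      have iq: "inverse (real (Suc q)) \<le> inverse (real (Suc N))" using q by (simp add: field_simps)
      have "\<epsilon>/8 * (norm (zs p - zs q))\<^sup>2 \<le> (h (zs p) + h (zs q))/2 - m" using strong zsD by blast
      also have "\<dots> < \<epsilon> * r\<^sup>2 / 8" using lin1[OF zsh[of p] zsh[of q] ip iq N] .
      finally have "(norm (zs p - zs q))\<^sup>2 < r\<^sup>2" using e by (simp add: field_simps)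
      then have "norm (zs p - zs q) < r" by (rule power2_less_imp_less) (use r in simp)
      then show "dist (zs p) (zs q) < r" by (simp add: dist_norm)
    qed
  qed
  then obtain z where zl: "zs \<longlonglongrightarrow> z" using Cauchy_convergent_iff convergent_def by blast
  define t where "t n = m + inverse (real (Suc n)) + inner u (zs n) - \<epsilon>/2 * (norm (zs n - y))\<^sup>2" for n
  have tl: "t \<longlonglongrightarrow> m + 0 + inner u z - \<epsilon>/2 * (norm (z - y))\<^sup>2"
    unfolding t_def by (intro tendsto_intros zl LIMSEQ_inverse_real_of_nat)
  have "f (zs n) \<le> ereal (t n)" for n
    using zsh[of n] fin[OF zsD[of n]] unfolding h_def t_def by simp
  from G0_lsc[OF G this zl tl] have fz: "f z \<le> ereal (m + 0 + inner u z - \<epsilon>/2 * (norm (z - y))\<^sup>2)" .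
  then have zD: "z \<in> D" unfolding D_def by auto
  have hz: "h z \<le> m" using fz fin[OF zD] unfolding h_def by simp
  have hmin: "h z \<le> h x" if "x \<in> D" for x using hz mle[OF that] by simp
  have sub: "u - \<epsilon> *\<^sub>R (z - y) \<in> subdiff f z"
    unfolding subdiff_def
  proof (intro CollectI conjI allI)
    show "f z \<noteq> \<infinity>" using zD unfolding D_def by simp
    fix x
    show "f z + ereal (inner (u - \<epsilon> *\<^sub>R (z - y)) (x - z)) \<le> f x"
    proof (cases "x \<in> D")
      case False then show ?thesis unfolding D_def by simp
    next
      case True
      let ?K = "\<epsilon>/2 * (norm (x - z))\<^sup>2"
      have tineq: "F z + inner (u - \<epsilon> *\<^sub>R (z - y)) (x - z) \<le> F x + t * ?K" if t: "0 < t" "t \<le> 1" for t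
      proof -
        let ?zt = "(1-t) *\<^sub>R z + t *\<^sub>R x"
        have le: "f ?zt \<le> ereal ((1-t) * F z + t * F x)"
          using G0_conv[OF G, of z x t] zD True t unfolding D_def F_def by auto
        then have ztD: "?zt \<in> D" unfolding D_def by auto
        have Fzt: "F ?zt \<le> (1-t) * F z + t * F x" using le fin[OF ztD] by simp
        have "h z \<le> h ?zt" using hmin ztD by blast
        then have "F z - inner u z + \<epsilon>/2 * (norm (z - y))\<^sup>2
           \<le> F ?zt - (inner u z + t * inner u (x - z)) + \<epsilon>/2 * ((norm (z-y))\<^sup>2 + 2*t*inner (z-y) (x-z) + t\<^sup>2 * (norm (x-z))\<^sup>2)"
          unfolding h_def seg_id by (simp add: inner_add_right inner_diff_right algebra_simps)
        then have "t * (F z + inner u (x - z) - \<epsilon> * inner (z-y) (x-z)) \<le> t * (F x + t * ?K)"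
          using Fzt by (simp add: algebra_simps power2_eq_square)
        then have "F z + inner u (x - z) - \<epsilon> * inner (z-y) (x-z) \<le> F x + t * ?K"
          using t by simp
        then show ?thesis by (simp add: inner_diff_left)
      qed
      have K0: "0 \<le> ?K" using e by (intro mult_nonneg_nonneg) auto
      have "F z + inner (u - \<epsilon> *\<^sub>R (z - y)) (x - z) \<le> F x"
        using tineq K0 by (rule small_t)
      then show ?thesis using fin[OF zD] fin[OF True] by simp
    qed
  qed
  show ?thesis
    apply (rule exI[of _ z])
    using zD sub hmin unfolding D_def h_def F_def by auto
qed



definition ind :: "'a set \<Rightarrow> 'a \<Rightarrow> ereal" where
  "ind C x = (if x \<in> C then 0 else \<infinity>)"

lemma Gamma0_ind:
  fixes C :: "'a::real_normed_vector set"
  assumes "closed C" "convex C" "C \<noteq> {}"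
  shows "Gamma0 (ind C)"
proof -
  have e: "epigraph (ind C) = C \<times> {0..}"
    unfolding epigraph_def ind_def by (auto split: if_splits)
  show ?thesis unfolding Gamma0_def e using assms
    by (auto intro!: convex_Times closed_Times simp: ind_def)
qed

lemma norm_decomp:
  fixes w z :: "'a::real_inner"
  shows "(norm w)\<^sup>2 = (norm z)\<^sup>2 + 2 * inner (w - z) z + (norm (w - z))\<^sup>2"
  unfolding power2_norm_eq_inner
  by (simp add: inner_diff_left inner_diff_right inner_commute algebra_simps)

lemma proj0:
  fixes C :: "'a::{real_inner,complete_space} set"
  assumes cl: "closed C" and cv: "convex C" and ne: "C \<noteq> {}"
  shows "proj C 0 \<in> C \<and> (\<forall>x\<in>C. 0 \<le> inner (x - proj C 0) (proj C 0))"
proof -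
  have G: "Gamma0 (ind C)" using Gamma0_ind[OF assms] .
  have lb: "ereal (inner 0 x - 0) \<le> ind C x" for x :: 'a by (simp add: ind_def)
  from min_exists[OF G lb zero_less_one, of 0]
  obtain z where z: "ind C z \<noteq> \<infinity>" "0 - 1 *\<^sub>R (z - 0) \<in> subdiff (ind C) z"
    by blast
  have zC: "z \<in> C" using z(1) by (auto simp: ind_def split: if_splits)
  have vi: "0 \<le> inner (x - z) z" if "x \<in> C" for x
  proof -
    have "\<forall>y. ind C z + ereal (inner (0 - 1 *\<^sub>R (z - 0)) (y - z)) \<le> ind C y"
      using z(2) unfolding subdiff_def by blast
    then have "ind C z + ereal (inner (- z) (x - z)) \<le> ind C x" by simp
    then have "inner (- z) (x - z) \<le> 0" using zC that by (simp add: ind_def)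
    then show ?thesis by (simp add: inner_commute)
  qed
  have mn: "norm z \<le> norm x" if "x \<in> C" for x
  proof -
    have "(norm x)\<^sup>2 = (norm z)\<^sup>2 + 2 * inner (x - z) z + (norm (x - z))\<^sup>2" by (rule norm_decomp)
    moreover have "0 \<le> (norm (x - z))\<^sup>2" by simp
    ultimately have "(norm z)\<^sup>2 \<le> (norm x)\<^sup>2" using vi[OF that] by linarith
    then show ?thesis by (rule power2_le_imp_le) simp
  qed
  have "proj C 0 = z" unfolding proj_def
  proof (rule the_equality)
    show "z \<in> C \<and> (\<forall>w\<in>C. dist 0 z \<le> dist 0 w)" using zC mn by simp
  next
    fix y assume y: "y \<in> C \<and> (\<forall>w\<in>C. dist 0 y \<le> dist 0 w)"
    then have "norm y \<le> norm z" using zC by auto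
    then have "(norm y)\<^sup>2 \<le> (norm z)\<^sup>2" by (simp add: power_mono)
    moreover have "(norm y)\<^sup>2 = (norm z)\<^sup>2 + 2 * inner (y - z) z + (norm (y - z))\<^sup>2" by (rule norm_decomp)
    moreover have "0 \<le> inner (y - z) z" using vi y by blast
    ultimately have "(norm (y - z))\<^sup>2 \<le> 0" by linarith
    then show "y = z" by simp
  qed
  then show ?thesis using zC vi by simp
qed

lemma subdiff_ineq:
  assumes G: "Gamma0 f" and a: "a \<in> subdiff f x" and y: "f y \<noteq> \<infinity>"
  shows "real_of_ereal (f x) + inner a (y - x) \<le> real_of_ereal (f y)"
proof -
  have fx: "f x \<noteq> \<infinity>" and le: "f x + ereal (inner a (y - x)) \<le> f y" using a unfolding subdiff_def by auto
  show ?thesis using le G0_fin[OF G fx] G0_fin[OF G y]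
    by (metis plus_ereal.simps(1) ereal_less_eq(3))
qed

lemma subdiff_finite: "a \<in> subdiff f x \<Longrightarrow> f x \<noteq> \<infinity>"
  unfolding subdiff_def by auto

lemma subdiff_mono:
  assumes G: "Gamma0 f" and a: "a \<in> subdiff f x" and b: "b \<in> subdiff f y"
  shows "0 \<le> inner (a - b) (x - y)"
proof -
  have "real_of_ereal (f x) + inner a (y - x) \<le> real_of_ereal (f y)"
    using subdiff_ineq[OF G a subdiff_finite[OF b]] .
  moreover have "real_of_ereal (f y) + inner b (x - y) \<le> real_of_ereal (f x)"
    using subdiff_ineq[OF G b subdiff_finite[OF a]] .
  ultimately show ?thesis
    by (simp add: inner_diff_left inner_diff_right algebra_simps)
qed

lemma prox_eq:
  assumes G: "Gamma0 f" and a: "a \<in> subdiff f p"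
  shows "prox f (p + a) = p"
  unfolding prox_def
proof (rule the_equality)
  show "p + a - p \<in> subdiff f p" using a by simp
next
  fix q assume q: "p + a - q \<in> subdiff f q"
  have "0 \<le> inner (a - (p + a - q)) (p - q)" using subdiff_mono[OF G a q] .
  then have "inner (p - q) (p - q) \<le> 0"
    by (simp add: inner_diff_left inner_diff_right inner_commute algebra_simps)
  moreover have "0 \<le> inner (p - q) (p - q)" by simp
  ultimately have "inner (p - q) (p - q) = 0" by linarith
  then show "q = p" by simp
qed

definition dstar :: "('a::real_inner \<Rightarrow> ereal) \<Rightarrow> 'a set" where
  "dstar f = {u. \<exists>C. \<forall>x. ereal (inner u x - C) \<le> f x}"

lemma ran_sub_dstar:
  assumes G: "Gamma0 f" and a: "a \<in> subdiff f x0"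
  shows "\<forall>x. ereal (inner a x - (inner a x0 - real_of_ereal (f x0))) \<le> f x"
proof
  fix x show "ereal (inner a x - (inner a x0 - real_of_ereal (f x0))) \<le> f x"
  proof (cases "f x = \<infinity>")
    case False
    have "real_of_ereal (f x0) + inner a (x - x0) \<le> real_of_ereal (f x)"
      using subdiff_ineq[OF G a False] .
    then have "inner a x - (inner a x0 - real_of_ereal (f x0)) \<le> real_of_ereal (f x)"
      by (simp add: inner_diff_right)
    then show ?thesis using G0_fin[OF G False] by (metis ereal_less_eq(3))
  qed simp
qed

lemma ran_closure:
  fixes f :: "'a::{real_inner,complete_space} \<Rightarrow> ereal"
  assumes G: "Gamma0 f" and u: "u \<in> dstar f"
  shows "u \<in> closure (ran_subdiff f)"
proof -
  obtain C where lb: "\<And>x. ereal (inner u x - C) \<le> f x" using u unfolding dstar_def by auto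
  obtain y0 where y0: "f y0 \<noteq> \<infinity>" using G unfolding Gamma0_def by auto
  have Flb: "inner u x - C \<le> real_of_ereal (f x)" if "f x \<noteq> \<infinity>" for x
    using lb[of x] G0_fin[OF G that] by (metis ereal_less_eq(3))
  define K where "K = real_of_ereal (f y0) - inner u y0 + C"
  have K0: "0 \<le> K" using Flb[OF y0] unfolding K_def by simp
  define M where "M = 2 * K + (norm y0)\<^sup>2"
  have M0: "0 \<le> M" using K0 unfolding M_def by simp
  show ?thesis unfolding closure_approachable
  proof (intro allI impI)
    fix e :: real assume e: "0 < e"
    define \<epsilon> where "\<epsilon> = min 1 (e\<^sup>2 / (M + 1))"
    have ep: "0 < \<epsilon>" "\<epsilon> \<le> 1" "\<epsilon> \<le> e\<^sup>2 / (M + 1)" using e M0 unfolding \<epsilon>_def by auto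
    obtain z where z: "f z \<noteq> \<infinity>"
      and zmin: "\<forall>x. f x \<noteq> \<infinity> \<longrightarrow> real_of_ereal (f z) - inner u z + \<epsilon>/2 * (norm (z - 0))\<^sup>2
          \<le> real_of_ereal (f x) - inner u x + \<epsilon>/2 * (norm (x - 0))\<^sup>2"
      and zs: "u - \<epsilon> *\<^sub>R (z - 0) \<in> subdiff f z"
      using min_exists[OF G lb ep(1), of 0] by blast
    have "real_of_ereal (f z) - inner u z + \<epsilon>/2 * (norm z)\<^sup>2
          \<le> real_of_ereal (f y0) - inner u y0 + \<epsilon>/2 * (norm y0)\<^sup>2" using zmin y0 by simp
    then have "\<epsilon>/2 * (norm z)\<^sup>2 \<le> K + \<epsilon>/2 * (norm y0)\<^sup>2" using Flb[OF z] unfolding K_def by simp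
    then have "\<epsilon> * (norm z)\<^sup>2 \<le> 2 * K + \<epsilon> * (norm y0)\<^sup>2" by simp
    also have "\<dots> \<le> M" unfolding M_def using ep by (simp add: mult_left_le_one_le)
    finally have A: "\<epsilon> * (norm z)\<^sup>2 \<le> M" .
    have "(norm (\<epsilon> *\<^sub>R z))\<^sup>2 = \<epsilon> * (\<epsilon> * (norm z)\<^sup>2)" using ep by (simp add: power2_eq_square)
    also have "\<dots> \<le> \<epsilon> * M" using A ep by (simp add: mult_left_mono)
    also have "\<dots> \<le> e\<^sup>2 / (M + 1) * M" using mult_right_mono[OF ep(3) M0] by simp
    also have "\<dots> < e\<^sup>2" using e M0 by (simp add: field_simps)
    finally have "norm (\<epsilon> *\<^sub>R z) < e" by (rule power2_less_imp_less) (use e in simp)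
    moreover have "u - \<epsilon> *\<^sub>R z \<in> ran_subdiff f" using zs unfolding ran_subdiff_def by auto
    moreover have "dist (u - \<epsilon> *\<^sub>R z) u = norm (\<epsilon> *\<^sub>R z)"
      unfolding dist_norm by (metis add_diff_cancel_left' diff_add_cancel norm_minus_cancel minus_diff_eq)
    ultimately show "\<exists>y\<in>ran_subdiff f. dist y u < e" by metis
  qed
qed

lemma dom_closure:
  fixes f :: "'a::{real_inner,complete_space} \<Rightarrow> ereal"
  assumes G: "Gamma0 f" and a: "a \<in> subdiff f x0" and y: "f y \<noteq> \<infinity>"
  shows "y \<in> closure (dom_subdiff f)"
proof -
  define C where "C = inner a x0 - real_of_ereal (f x0)"
  have lb: "\<And>x. ereal (inner a x - C) \<le> f x" using ran_sub_dstar[OF G a] unfolding C_def by blast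
  have Flb: "inner a x - C \<le> real_of_ereal (f x)" if "f x \<noteq> \<infinity>" for x
    using lb[of x] G0_fin[OF G that] by (metis ereal_less_eq(3))
  define K where "K = real_of_ereal (f y) - inner a y + C"
  have K0: "0 \<le> K" using Flb[OF y] unfolding K_def by simp
  show ?thesis unfolding closure_approachable
  proof (intro allI impI)
    fix e :: real assume e: "0 < e"
    define \<epsilon> where "\<epsilon> = (2 * K + 1) / e\<^sup>2"
    have ep: "0 < \<epsilon>" using e K0 unfolding \<epsilon>_def by simp
    obtain z where z: "f z \<noteq> \<infinity>"
      and zmin: "\<forall>x. f x \<noteq> \<infinity> \<longrightarrow> real_of_ereal (f z) - inner a z + \<epsilon>/2 * (norm (z - y))\<^sup>2
          \<le> real_of_ereal (f x) - inner a x + \<epsilon>/2 * (norm (x - y))\<^sup>2"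
      and zs: "a - \<epsilon> *\<^sub>R (z - y) \<in> subdiff f z"
      using min_exists[OF G lb ep, of y] by blast
    have "real_of_ereal (f z) - inner a z + \<epsilon>/2 * (norm (z - y))\<^sup>2
          \<le> real_of_ereal (f y) - inner a y + \<epsilon>/2 * (norm (y - y))\<^sup>2" using zmin[rule_format, OF y] .
    then have "\<epsilon>/2 * (norm (z - y))\<^sup>2 \<le> K" using Flb[OF z] unfolding K_def by simp
    then have A: "\<epsilon> * (norm (z - y))\<^sup>2 \<le> 2 * K" by simp
    have "(2 * K + 1) * (norm (z - y))\<^sup>2 = (\<epsilon> * (norm (z - y))\<^sup>2) * e\<^sup>2"
      using e unfolding \<epsilon>_def by simp
    also have "\<dots> \<le> 2 * K * e\<^sup>2" using mult_right_mono[OF A, of "e\<^sup>2"] by simp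
    also have "\<dots> < (2 * K + 1) * e\<^sup>2" using e by simp
    finally have B: "(2 * K + 1) * (norm (z - y))\<^sup>2 < (2 * K + 1) * e\<^sup>2" .
    have "(norm (z - y))\<^sup>2 < e\<^sup>2"
      using mult_less_cancel_left_pos[of "2 * K + 1"] B K0 by simp
    then have "norm (z - y) < e" by (rule power2_less_imp_less) (use e in simp)
    moreover have "z \<in> dom_subdiff f" using zs unfolding dom_subdiff_def by auto
    moreover have "dist z y = norm (z - y)" by (rule dist_norm)
    ultimately show "\<exists>z\<in>dom_subdiff f. dist z y < e" by metis
  qed
qed



lemma argmin_char:
  fixes \<phi> \<psi> :: "'a::real_inner \<Rightarrow> ereal" and c a0 b0 x0 :: 'a
  assumes n\<phi>: "\<And>x. \<phi> x \<noteq> -\<infinity>" and n\<psi>: "\<And>x. \<psi> x \<noteq> -\<infinity>"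
    and f0: "\<phi> x0 \<noteq> \<infinity>" and g0: "\<psi> x0 \<noteq> \<infinity>"
    and a0: "\<And>y. \<phi> x0 + ereal (inner a0 (y - x0)) \<le> \<phi> y"
    and b0: "\<And>y. \<psi> x0 + ereal (inner b0 (y - x0)) \<le> \<psi> y"
    and c: "a0 + b0 = c"
  shows "argmin (\<lambda>x. ereal (- inner x c) + \<phi> x + \<psi> x) =
    {x. \<exists>a b. \<phi> x \<noteq> \<infinity> \<and> (\<forall>y. \<phi> x + ereal (inner a (y - x)) \<le> \<phi> y)
         \<and> \<psi> x \<noteq> \<infinity> \<and> (\<forall>y. \<psi> x + ereal (inner b (y - x)) \<le> \<psi> y) \<and> a + b = c}"
proof -
  define P where "P x = real_of_ereal (\<phi> x)" for x
  define Q where "Q x = real_of_ereal (\<psi> x)" for x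
  have Pf: "\<phi> x = ereal (P x)" if "\<phi> x \<noteq> \<infinity>" for x
    using that n\<phi>[of x] unfolding P_def by (cases "\<phi> x") auto
  have Qf: "\<psi> x = ereal (Q x)" if "\<psi> x \<noteq> \<infinity>" for x
    using that n\<psi>[of x] unfolding Q_def by (cases "\<psi> x") auto
  have hinf: "ereal r + \<phi> x + \<psi> x = \<infinity>" if "\<phi> x = \<infinity> \<or> \<psi> x = \<infinity>" for r x
    using that n\<phi>[of x] n\<psi>[of x] by auto
  have hfin: "ereal (- inner x c) + \<phi> x + \<psi> x = ereal (- inner x c + P x + Q x)"
    if "\<phi> x \<noteq> \<infinity>" "\<psi> x \<noteq> \<infinity>" for x
    using Pf[OF that(1)] Qf[OF that(2)] by simp
  show ?thesis
  proof (intro set_eqI iffI)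
    fix x assume "x \<in> {x. \<exists>a b. \<phi> x \<noteq> \<infinity> \<and> (\<forall>y. \<phi> x + ereal (inner a (y - x)) \<le> \<phi> y)
         \<and> \<psi> x \<noteq> \<infinity> \<and> (\<forall>y. \<psi> x + ereal (inner b (y - x)) \<le> \<psi> y) \<and> a + b = c}"
    then obtain a b where fx: "\<phi> x \<noteq> \<infinity>" and ax: "\<forall>y. \<phi> x + ereal (inner a (y - x)) \<le> \<phi> y"
      and gx: "\<psi> x \<noteq> \<infinity>" and bx: "\<forall>y. \<psi> x + ereal (inner b (y - x)) \<le> \<psi> y" and ab: "a + b = c"
      by blast
    show "x \<in> argmin (\<lambda>x. ereal (- inner x c) + \<phi> x + \<psi> x)"
      unfolding argmin_def
    proof (intro CollectI allI)
      fix y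
      show "ereal (- inner x c) + \<phi> x + \<psi> x \<le> ereal (- inner y c) + \<phi> y + \<psi> y"
      proof (cases "\<phi> y = \<infinity> \<or> \<psi> y = \<infinity>")
        case True
        have eq: "ereal (- inner y c) + \<phi> y + \<psi> y = \<infinity>" by (rule hinf[OF True])
        show ?thesis by (subst eq) simp
      next
        case False
        then have fy: "\<phi> y \<noteq> \<infinity>" and gy: "\<psi> y \<noteq> \<infinity>" by auto
        have "P x + inner a (y - x) \<le> P y" using ax[rule_format, of y] Pf[OF fx] Pf[OF fy] by simp
        moreover have "Q x + inner b (y - x) \<le> Q y" using bx[rule_format, of y] Qf[OF gx] Qf[OF gy] by simp
        ultimately have "- inner x c + P x + Q x \<le> - inner y c + P y + Q y"
          unfolding ab[symmetric] by (simp add: inner_diff_right inner_add_left inner_commute algebra_simps)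
        then show ?thesis using hfin[OF fx gx] hfin[OF fy gy] by simp
      qed
    qed
  next
    fix x assume "x \<in> argmin (\<lambda>x. ereal (- inner x c) + \<phi> x + \<psi> x)"
    then have le: "ereal (- inner x c) + \<phi> x + \<psi> x \<le> ereal (- inner x0 c) + \<phi> x0 + \<psi> x0"
      unfolding argmin_def by blast
    have fx: "\<phi> x \<noteq> \<infinity>" and gx: "\<psi> x \<noteq> \<infinity>"
      using le hinf[of x "- inner x c"] hfin[OF f0 g0] by auto
    have r: "- inner x c + P x + Q x \<le> - inner x0 c + P x0 + Q x0"
      using le hfin[OF fx gx] hfin[OF f0 g0] by simp
    have pa: "P x0 + inner a0 (x - x0) \<le> P x" using a0[of x] Pf[OF f0] Pf[OF fx] by simp
    have qb: "Q x0 + inner b0 (x - x0) \<le> Q x" using b0[of x] Qf[OF g0] Qf[OF gx] by simp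
    have ic: "inner a0 (x - x0) + inner b0 (x - x0) = inner x c - inner x0 c"
      unfolding c[symmetric] by (simp add: inner_diff_right inner_add_left inner_add_right inner_commute algebra_simps)
    have peq: "P x = P x0 + inner a0 (x - x0)" using r pa qb ic by linarith
    have qeq: "Q x = Q x0 + inner b0 (x - x0)" using r pa qb ic by linarith
    have A: "\<phi> x + ereal (inner a0 (y - x)) \<le> \<phi> y" for y
    proof (cases "\<phi> y = \<infinity>")
      case False
      have "P x0 + inner a0 (y - x0) \<le> P y" using a0[of y] Pf[OF f0] Pf[OF False] by simp
      then have "P x + inner a0 (y - x) \<le> P y" using peq by (simp add: inner_diff_right)
      then show ?thesis using Pf[OF fx] Pf[OF False] by simp
    qed simp
    have B: "\<psi> x + ereal (inner b0 (y - x)) \<le> \<psi> y" for y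
    proof (cases "\<psi> y = \<infinity>")
      case False
      have "Q x0 + inner b0 (y - x0) \<le> Q y" using b0[of y] Qf[OF g0] Qf[OF False] by simp
      then have "Q x + inner b0 (y - x) \<le> Q y" using qeq by (simp add: inner_diff_right)
      then show ?thesis using Qf[OF gx] Qf[OF False] by simp
    qed simp
    show "x \<in> {x. \<exists>a b. \<phi> x \<noteq> \<infinity> \<and> (\<forall>y. \<phi> x + ereal (inner a (y - x)) \<le> \<phi> y)
         \<and> \<psi> x \<noteq> \<infinity> \<and> (\<forall>y. \<psi> x + ereal (inner b (y - x)) \<le> \<psi> y) \<and> a + b = c}"
      using fx gx A B c by blast
  qed
qed

lemma subdiff_shift:
  "b \<in> subdiff g (x - v) \<longleftrightarrow> g (x - v) \<noteq> \<infinity> \<and> (\<forall>y. g (x - v) + ereal (inner b (y - x)) \<le> g (y - v))"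
proof -
  have "(\<forall>z. g (x - v) + ereal (inner b (z - (x - v))) \<le> g z) \<longleftrightarrow> (\<forall>y. g (x - v) + ereal (inner b (y - x)) \<le> g (y - v))"
  proof
    assume H: "\<forall>z. g (x - v) + ereal (inner b (z - (x - v))) \<le> g z"
    show "\<forall>y. g (x - v) + ereal (inner b (y - x)) \<le> g (y - v)"
    proof
      fix y show "g (x - v) + ereal (inner b (y - x)) \<le> g (y - v)"
        using H[rule_format, of "y - v"] by (simp add: algebra_simps)
    qed
  next
    assume H: "\<forall>y. g (x - v) + ereal (inner b (y - x)) \<le> g (y - v)"
    show "\<forall>z. g (x - v) + ereal (inner b (z - (x - v))) \<le> g z"
    proof
      fix z show "g (x - v) + ereal (inner b (z - (x - v))) \<le> g z"
        using H[rule_format, of "z + v"] by (simp add: algebra_simps)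
    qed
  qed
  then show ?thesis unfolding subdiff_def by auto
qed

lemma closure_plus:
  fixes a b :: "'a::real_normed_vector"
  assumes "a \<in> closure A" "b \<in> closure B"
  shows "a + b \<in> closure {x + y | x y. x \<in> A \<and> y \<in> B}"
  unfolding closure_approachable
proof (intro allI impI)
  fix e :: real assume e: "0 < e"
  obtain x where x: "x \<in> A" "dist x a < e/2" using assms(1) e unfolding closure_approachable by (meson half_gt_zero)
  obtain y where y: "y \<in> B" "dist y b < e/2" using assms(2) e unfolding closure_approachable by (meson half_gt_zero)
  have "dist (x + y) (a + b) \<le> dist x a + dist y b"
  proof -
    have e: "x + y - (a + b) = (x - a) + (y - b)" by (simp add: algebra_simps)
    show ?thesis unfolding dist_norm e by (rule norm_triangle_ineq)
  qed
  then have "dist (x + y) (a + b) < e" using x y by linarith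
  then show "\<exists>z\<in>{x + y | x y. x \<in> A \<and> y \<in> B}. dist z (a + b) < e" using x y by blast
qed

lemma closure_minus:
  fixes a b :: "'a::real_normed_vector"
  assumes "a \<in> closure A" "b \<in> closure B"
  shows "a - b \<in> closure {x - y | x y. x \<in> A \<and> y \<in> B}"
  unfolding closure_approachable
proof (intro allI impI)
  fix e :: real assume e: "0 < e"
  obtain x where x: "x \<in> A" "dist x a < e/2" using assms(1) e unfolding closure_approachable by (meson half_gt_zero)
  obtain y where y: "y \<in> B" "dist y b < e/2" using assms(2) e unfolding closure_approachable by (meson half_gt_zero)
  have "dist (x - y) (a - b) \<le> dist x a + dist y b"
  proof -
    have e: "x - y - (a - b) = (x - a) - (y - b)" by (simp add: algebra_simps)
    show ?thesis unfolding dist_norm e by (rule norm_triangle_ineq4)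
  qed
  then have "dist (x - y) (a - b) < e" using x y by linarith
  then show "\<exists>z\<in>{x - y | x y. x \<in> A \<and> y \<in> B}. dist z (a - b) < e" using x y by blast
qed



lemma convex_domf:
  assumes G: "Gamma0 f" shows "convex {x. f x \<noteq> \<infinity>}"
proof (rule convexI)
  fix x y :: 'a and u v :: real
  assume x: "x \<in> {x. f x \<noteq> \<infinity>}" and y: "y \<in> {x. f x \<noteq> \<infinity>}" and u: "0 \<le> u" and v: "0 \<le> v" and uv: "u + v = 1"
  have "f ((1-v) *\<^sub>R x + v *\<^sub>R y) \<le> ereal ((1-v) * real_of_ereal (f x) + v * real_of_ereal (f y))"
    using G0_conv[OF G, of x y v] x y v uv u by auto
  moreover have "u = 1 - v" using uv by simp
  ultimately show "u *\<^sub>R x + v *\<^sub>R y \<in> {x. f x \<noteq> \<infinity>}" by auto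
qed

lemma convex_dstar:
  assumes G: "Gamma0 f" shows "convex (dstar f)"
proof (rule convexI)
  fix x y :: 'a and u v :: real
  assume x: "x \<in> dstar f" and y: "y \<in> dstar f" and u: "0 \<le> u" and v: "0 \<le> v" and uv: "u + v = 1"
  obtain C1 where C1: "\<And>z. ereal (inner x z - C1) \<le> f z" using x unfolding dstar_def by auto
  obtain C2 where C2: "\<And>z. ereal (inner y z - C2) \<le> f z" using y unfolding dstar_def by auto
  have "ereal (inner (u *\<^sub>R x + v *\<^sub>R y) z - (u * C1 + v * C2)) \<le> f z" for z
  proof (cases "f z = \<infinity>")
    case False
    have a: "inner x z - C1 \<le> real_of_ereal (f z)" using C1[of z] G0_fin[OF G False] by (metis ereal_less_eq(3))
    have b: "inner y z - C2 \<le> real_of_ereal (f z)" using C2[of z] G0_fin[OF G False] by (metis ereal_less_eq(3))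
    have "u * (inner x z - C1) + v * (inner y z - C2) \<le> u * real_of_ereal (f z) + v * real_of_ereal (f z)"
      using a b u v by (intro add_mono mult_left_mono) auto
    also have "\<dots> = (u + v) * real_of_ereal (f z)" by (simp add: distrib_right)
    also have "\<dots> = real_of_ereal (f z)" using uv by simp
    finally have "inner (u *\<^sub>R x + v *\<^sub>R y) z - (u * C1 + v * C2) \<le> real_of_ereal (f z)"
      by (simp add: inner_add_left algebra_simps)
    then show ?thesis using G0_fin[OF G False] by (metis ereal_less_eq(3))
  qed simp
  then show "u *\<^sub>R x + v *\<^sub>R y \<in> dstar f" unfolding dstar_def by blast
qed

theorem proposition6p2:
  fixes f g :: "'a::{real_inner, complete_space} \<Rightarrow> ereal"
    and T :: "'a \<Rightarrow> 'a" and v :: 'a and D R Z :: "'a set"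
  assumes "Gamma0 f" and "Gamma0 g"
    and "T = (\<lambda>x. x - prox f x + prox g (refl_prox f x))"
    and "v = proj (closure (range (\<lambda>x. x - T x))) 0"
    and "D = {a - b | a b. a \<in> dom_subdiff f \<and> b \<in> dom_subdiff g}"
    and "R = {a + b | a b. a \<in> ran_subdiff f \<and> b \<in> ran_subdiff g}"
    and "closure (range (\<lambda>x. x - T x)) = closure (D \<inter> R)"
    and "closure (D \<inter> R) = closure D \<inter> closure R"
    and "proj (closure R) 0 = 0"
    and "Z = {x. \<exists>a b. a \<in> subdiff f x \<and> b \<in> subdiff g (x - v) \<and> 0 = - v + a + b}"
  shows "Z = {x. \<exists>a b. a \<in> subdiff f x \<and> b \<in> subdiff g (x - v) \<and> 0 = a + b}
         \<and> (Z \<noteq> {} \<longrightarrow>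
           Z = argmin (\<lambda>x. ereal (- inner x v) + f x + g (x - v))
         \<and> Z = argmin (\<lambda>x. f x + g (x - v)))"
proof -
  note Gf = assms(1) and Gg = assms(2)
  define S where "S = closure D \<inter> closure R"
  have S_eq: "closure (range (\<lambda>x. x - T x)) = S" using assms(7,8) unfolding S_def by simp
  have v_def: "v = proj S 0" using assms(4) S_eq by simp
  have "range (\<lambda>x. x - T x) \<noteq> {}" by simp
  then have Sne: "S \<noteq> {}" using S_eq closure_subset by fastforce
  then have "R \<noteq> {}" unfolding S_def by auto
  then obtain a1 b1 where "a1 \<in> ran_subdiff f" "b1 \<in> ran_subdiff g" using assms(6) by auto
  then obtain xf xg where a1: "a1 \<in> subdiff f xf" and b1: "b1 \<in> subdiff g xg"
    unfolding ran_subdiff_def by auto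
  have fxf: "f xf \<noteq> \<infinity>" using subdiff_finite[OF a1] .
  have gxg: "g xg \<noteq> \<infinity>" using subdiff_finite[OF b1] .
  define DD where "DD = {a - b | a b. a \<in> {x. f x \<noteq> \<infinity>} \<and> b \<in> {x. g x \<noteq> \<infinity>}}"
  define RR where "RR = {a + b | a b. a \<in> dstar f \<and> b \<in> dstar g}"
  have D_DD: "D \<subseteq> DD" unfolding assms(5) DD_def dom_subdiff_def using subdiff_finite by blast
  have DD_D: "DD \<subseteq> closure D"
  proof
    fix w assume "w \<in> DD"
    then obtain a b where w: "w = a - b" "f a \<noteq> \<infinity>" "g b \<noteq> \<infinity>" unfolding DD_def by auto
    have "a \<in> closure (dom_subdiff f)" using dom_closure[OF Gf a1 w(2)] .
    moreover have "b \<in> closure (dom_subdiff g)" using dom_closure[OF Gg b1 w(3)] .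
    ultimately show "w \<in> closure D" unfolding w(1) assms(5) by (rule closure_minus)
  qed
  have clD: "closure D = closure DD"
    using D_DD DD_D by (metis closure_closure closure_mono subset_antisym)
  have R_RR: "R \<subseteq> RR"
  proof
    fix w assume "w \<in> R"
    then obtain a b x y where w: "w = a + b" "a \<in> subdiff f x" "b \<in> subdiff g y"
      unfolding assms(6) ran_subdiff_def by auto
    have "a \<in> dstar f" using ran_sub_dstar[OF Gf w(2)] unfolding dstar_def by blast
    moreover have "b \<in> dstar g" using ran_sub_dstar[OF Gg w(3)] unfolding dstar_def by blast
    ultimately show "w \<in> RR" unfolding RR_def w(1) by blast
  qed
  have RR_R: "RR \<subseteq> closure R"
  proof
    fix w assume "w \<in> RR"
    then obtain a b where w: "w = a + b" "a \<in> dstar f" "b \<in> dstar g" unfolding RR_def by auto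
    have "a \<in> closure (ran_subdiff f)" using ran_closure[OF Gf w(2)] .
    moreover have "b \<in> closure (ran_subdiff g)" using ran_closure[OF Gg w(3)] .
    ultimately show "w \<in> closure R" unfolding w(1) assms(6) by (rule closure_plus)
  qed
  have clR: "closure R = closure RR"
    using R_RR RR_R by (metis closure_closure closure_mono subset_antisym)
  have cvDD: "convex DD"
  proof -
    have "DD = (\<Union>x\<in>{x. f x \<noteq> \<infinity>}. \<Union>y\<in>{x. g x \<noteq> \<infinity>}. {x - y})" unfolding DD_def by auto
    then show ?thesis using convex_differences[OF convex_domf[OF Gf] convex_domf[OF Gg]] by simp
  qed
  have cvRR: "convex RR"
  proof -
    have "RR = (\<Union>x\<in>dstar f. \<Union>y\<in>dstar g. {x + y})" unfolding RR_def by auto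
    then show ?thesis using convex_sums[OF convex_dstar[OF Gf] convex_dstar[OF Gg]] by simp
  qed
  have cvD: "convex (closure D)" unfolding clD using cvDD by simp
  have cvR: "convex (closure R)" unfolding clR using cvRR by simp
  have Dne: "closure D \<noteq> {}" using Sne unfolding S_def by auto
  have Rne: "closure R \<noteq> {}" using Sne unfolding S_def by auto
  have zeroR: "0 \<in> closure RR"
    using proj0[OF closed_closure cvR Rne] assms(9) clR by simp
  have Sp: "v \<in> S" "\<forall>x\<in>S. 0 \<le> inner (x - v) v"
    using proj0[of S] Sne cvD cvR unfolding v_def S_def by (auto intro: convex_Int)
  define vD where "vD = proj (closure D) 0"
  have Dp: "vD \<in> closure D" "\<forall>x\<in>closure D. 0 \<le> inner (x - vD) vD"
    using proj0[OF closed_closure cvD Dne] unfolding vD_def by auto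
  have KD: "0 \<le> inner (y - z - vD) vD" if "f y \<noteq> \<infinity>" "g z \<noteq> \<infinity>" for y z
  proof -
    have "y - z \<in> DD" unfolding DD_def using that by blast
    then have "y - z \<in> closure D" unfolding clD using closure_subset by blast
    then show ?thesis using Dp(2) by blast
  qed
  have gb: "inner vD z \<le> inner vD xf - inner vD vD" if "g z \<noteq> \<infinity>" for z
    using KD[OF fxf that] by (simp add: inner_diff_left inner_diff_right inner_commute)
  have shiftRR: "r + vD \<in> RR" if rR: "r \<in> RR" for r
  proof -
    from rR obtain a b where r: "r = a + b" "a \<in> dstar f" "b \<in> dstar g" unfolding RR_def by blast
    obtain C where C: "\<And>x. ereal (inner b x - C) \<le> g x" using r(3) unfolding dstar_def by auto
    have "ereal (inner (b + vD) x - (C + (inner vD xf - inner vD vD))) \<le> g x" for x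
    proof (cases "g x = \<infinity>")
      case False
      have "inner b x - C \<le> real_of_ereal (g x)" using C[of x] G0_fin[OF Gg False] by (metis ereal_less_eq(3))
      then have "inner (b + vD) x - (C + (inner vD xf - inner vD vD)) \<le> real_of_ereal (g x)"
        using gb[OF False] inner_add_left[of b vD x] by linarith
      then show ?thesis using G0_fin[OF Gg False] by (metis ereal_less_eq(3))
    qed simp
    then have "b + vD \<in> dstar g" unfolding dstar_def by blast
    then show ?thesis unfolding RR_def r(1) using r(2) by (metis (mono_tags, lifting) add.assoc mem_Collect_eq)
  qed
  have "vD \<in> closure RR" unfolding closure_approachable
  proof (intro allI impI)
    fix e :: real assume "0 < e"
    then obtain r where "r \<in> RR" "dist r 0 < e" using zeroR unfolding closure_approachable by blast
    moreover have "dist (r + vD) vD = dist r 0" by (simp add: dist_norm)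
    ultimately show "\<exists>y\<in>RR. dist y vD < e" using shiftRR by metis
  qed
  then have vDS: "vD \<in> S" unfolding S_def clR using Dp(1) by simp
  have "0 \<le> inner (vD - v) v" using Sp(2) vDS by blast
  moreover have "0 \<le> inner (v - vD) vD" using Dp(2) Sp(1) unfolding S_def by blast
  ultimately have "inner (v - vD) (v - vD) \<le> 0"
    by (simp add: inner_diff_left inner_diff_right inner_commute algebra_simps)
  moreover have "0 \<le> inner (v - vD) (v - vD)" by simp
  ultimately have "inner (v - vD) (v - vD) = 0" by linarith
  then have vvD: "v = vD" by simp
  have KEY: "0 \<le> inner (y - z - v) v" if "f y \<noteq> \<infinity>" "g z \<noteq> \<infinity>" for y z
    using KD[OF that] vvD by simp
  have shiftf: "a - v \<in> subdiff f x" if a: "a \<in> subdiff f x" and gx: "g (x - v) \<noteq> \<infinity>" for a x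
    unfolding subdiff_def
  proof (intro CollectI conjI allI)
    show fx: "f x \<noteq> \<infinity>" using subdiff_finite[OF a] .
    fix y show "f x + ereal (inner (a - v) (y - x)) \<le> f y"
    proof (cases "f y = \<infinity>")
      case False
      have "0 \<le> inner (y - (x - v) - v) v" using KEY[OF False gx] .
      then have k: "0 \<le> inner v (y - x)" by (simp add: inner_commute)
      have "real_of_ereal (f x) + inner a (y - x) \<le> real_of_ereal (f y)" using subdiff_ineq[OF Gf a False] .
      then have "real_of_ereal (f x) + inner (a - v) (y - x) \<le> real_of_ereal (f y)"
        using k by (simp add: inner_diff_left)
      then show ?thesis using G0_fin[OF Gf fx] G0_fin[OF Gf False] by (metis plus_ereal.simps(1) ereal_less_eq(3))
    qed simp
  qed
  have shiftg: "b + v \<in> subdiff g (x - v)" if b: "b \<in> subdiff g (x - v)" and fx: "f x \<noteq> \<infinity>" for b x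
    unfolding subdiff_def
  proof (intro CollectI conjI allI)
    show gx: "g (x - v) \<noteq> \<infinity>" using subdiff_finite[OF b] .
    fix z show "g (x - v) + ereal (inner (b + v) (z - (x - v))) \<le> g z"
    proof (cases "g z = \<infinity>")
      case False
      have "0 \<le> inner (x - z - v) v" using KEY[OF fx False] .
      then have k: "inner v (z - (x - v)) \<le> 0" by (simp add: inner_diff_left inner_diff_right inner_commute)
      have "real_of_ereal (g (x - v)) + inner b (z - (x - v)) \<le> real_of_ereal (g z)" using subdiff_ineq[OF Gg b False] .
      then have "real_of_ereal (g (x - v)) + inner (b + v) (z - (x - v)) \<le> real_of_ereal (g z)"
        using k by (simp add: inner_add_left)
      then show ?thesis using G0_fin[OF Gg gx] G0_fin[OF Gg False] by (metis plus_ereal.simps(1) ereal_less_eq(3))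
    qed simp
  qed
  define Z' where "Z' = {x. \<exists>a b. a \<in> subdiff f x \<and> b \<in> subdiff g (x - v) \<and> 0 = a + b}"
  have ZZ: "Z = Z'"
  proof (intro set_eqI iffI)
    fix x assume "x \<in> Z"
    then obtain a b where ab: "a \<in> subdiff f x" "b \<in> subdiff g (x - v)" "0 = - v + a + b" unfolding assms(10) by auto
    have "a - v \<in> subdiff f x" using shiftf[OF ab(1) subdiff_finite[OF ab(2)]] .
    moreover have "0 = (a - v) + b" using ab(3) by (simp add: algebra_simps)
    ultimately show "x \<in> Z'" unfolding Z'_def using ab(2) by blast
  next
    fix x assume "x \<in> Z'"
    then obtain a b where ab: "a \<in> subdiff f x" "b \<in> subdiff g (x - v)" "0 = a + b" unfolding Z'_def by auto
    have "b + v \<in> subdiff g (x - v)" using shiftg[OF ab(2) subdiff_finite[OF ab(1)]] .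
    moreover have "0 = - v + a + (b + v)" using ab(3) by (simp add: algebra_simps)
    ultimately show "x \<in> Z" unfolding assms(10) using ab(1) by blast
  qed
  have part2: "Z = argmin (\<lambda>x. ereal (- inner x v) + f x + g (x - v))
         \<and> Z = argmin (\<lambda>x. f x + g (x - v))" if Zne: "Z \<noteq> {}"
  proof -
    obtain x0 where "x0 \<in> Z" using Zne by auto
    then obtain a0 b0 where ab0: "a0 \<in> subdiff f x0" "b0 \<in> subdiff g (x0 - v)" "0 = - v + a0 + b0"
      unfolding assms(10) by auto
    have nf: "\<And>x. f x \<noteq> -\<infinity>" using Gf unfolding Gamma0_def by auto
    have ng: "\<And>x. g (x - v) \<noteq> -\<infinity>" using Gg unfolding Gamma0_def by auto
    have f0: "f x0 \<noteq> \<infinity>" and fa0: "\<And>y. f x0 + ereal (inner a0 (y - x0)) \<le> f y"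
      using ab0(1) unfolding subdiff_def by auto
    have g0: "g (x0 - v) \<noteq> \<infinity>" and gb0: "\<And>y. g (x0 - v) + ereal (inner b0 (y - x0)) \<le> g (y - v)"
      using ab0(2) unfolding subdiff_shift by auto
    have c1: "a0 + b0 = v" using ab0(3) by (simp add: algebra_simps)
    have fa0': "\<And>y. f x0 + ereal (inner (a0 - v) (y - x0)) \<le> f y"
      using shiftf[OF ab0(1) g0] unfolding subdiff_def by auto
    have c2: "(a0 - v) + b0 = 0" using ab0(3) by (simp add: algebra_simps)
    have sf: "a \<in> subdiff f x \<longleftrightarrow> f x \<noteq> \<infinity> \<and> (\<forall>y. f x + ereal (inner a (y - x)) \<le> f y)" for a x
      unfolding subdiff_def by (rule mem_Collect_eq)
    have set_eq: "{x. \<exists>a b. f x \<noteq> \<infinity> \<and> (\<forall>y. f x + ereal (inner a (y - x)) \<le> f y)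
         \<and> g (x - v) \<noteq> \<infinity> \<and> (\<forall>y. g (x - v) + ereal (inner b (y - x)) \<le> g (y - v)) \<and> a + b = c}
         = {x. \<exists>a b. a \<in> subdiff f x \<and> b \<in> subdiff g (x - v) \<and> a + b = c}" for c
      by (simp only: sf subdiff_shift conj_assoc)
    have A1: "argmin (\<lambda>x. ereal (- inner x v) + f x + g (x - v)) = {x. \<exists>a b. a \<in> subdiff f x \<and> b \<in> subdiff g (x - v) \<and> a + b = v}"
      using argmin_char[of f "\<lambda>x. g (x - v)", OF nf ng f0 g0 fa0 gb0 c1] unfolding set_eq .
    have A2: "argmin (\<lambda>x. ereal (- inner x 0) + f x + g (x - v)) = {x. \<exists>a b. a \<in> subdiff f x \<and> b \<in> subdiff g (x - v) \<and> a + b = 0}"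
      using argmin_char[of f "\<lambda>x. g (x - v)", OF nf ng f0 g0 fa0' gb0 c2] unfolding set_eq .
    have q1: "(0 = - v + a + b) \<longleftrightarrow> (a + b = v)" for a b :: 'a
      by (metis add.assoc add.commute add_right_imp_eq neg_eq_iff_add_eq_0 add_0)
    have e1: "Z = {x. \<exists>a b. a \<in> subdiff f x \<and> b \<in> subdiff g (x - v) \<and> a + b = v}"
      unfolding assms(10) q1 ..
    have q2: "(0 = a + b) \<longleftrightarrow> (a + b = 0)" for a b :: 'a by (rule eq_commute)
    have e2: "Z = {x. \<exists>a b. a \<in> subdiff f x \<and> b \<in> subdiff g (x - v) \<and> a + b = 0}"
      using ZZ unfolding Z'_def q2 .
    have e3: "(\<lambda>x. ereal (- inner x 0) + f x + g (x - v)) = (\<lambda>x. f x + g (x - v))"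
      by (rule ext) (simp add: zero_ereal_def[symmetric])
    show ?thesis using A1 A2 e1 e2 unfolding e3 by simp
  qed
  show ?thesis using ZZ part2 unfolding Z'_def by blast
qed

end
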